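(* Let $n_1,n_2\ge2$, $k\ge4$, and let $T$ be the double broom $P(n_1-1,k,n_2-1)$. Then $$\dim S/I(T^2)=\left\lceil\frac{k-4}3\right\rceil+2,$$ where $S$ is the polynomial ring over a field $\Bbbk$ in one variable per vertex of $T$.
   Context: The double broom $P(n_1-1,k,n_2-1)$ is the tree obtained from a path $p_1,p_2,\dots,p_k$ on $k$ vertices by attaching $n_1-1$ new vertices of degree 1 to $p_1$ and $n_2-1$ new vertices of degree 1 to $p_k$. $T^2$ is the graph on $V(T)$ with edges the pairs at distance 1 or 2 in $T$. $I(G)=\langle x_ux_v:\{u,v\}\in E(G)\rangle$, and $\dim$ is Krull dimension. *)

theory Defs
  imports "HOL-Algebra.QuotRing" "HOL-Library.Poly_Mapping" "HOL-Library.Extended_Nat"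
begin

definition krull_dim :: "('a, 'b) ring_scheme \<Rightarrow> enat" where
  "krull_dim R = Sup {enat n | n. \<exists>P :: nat \<Rightarrow> 'a set.
      (\<forall>i\<le>n. primeideal (P i) R) \<and> (\<forall>i<n. P i \<subset> P (Suc i))}"

text \<open>Polynomials in variables indexed by 'v with coefficients in 'k, as finitely
  supported maps from monomials (finitely supported exponent vectors) to coefficients.\<close>
definition poly_ring :: "(('v \<Rightarrow>\<^sub>0 nat) \<Rightarrow>\<^sub>0 'k::field) ring" where
  "poly_ring = \<lparr>carrier = UNIV, monoid.mult = (*), one = 1, zero = 0, add = (+)\<rparr>"

definition pvar :: "'v \<Rightarrow> ('v \<Rightarrow>\<^sub>0 nat) \<Rightarrow>\<^sub>0 'k::field" where
  "pvar v = Poly_Mapping.single (Poly_Mapping.single v 1) 1"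

definition edge_ideal :: "('v \<Rightarrow> 'v \<Rightarrow> bool) \<Rightarrow> (('v \<Rightarrow>\<^sub>0 nat) \<Rightarrow>\<^sub>0 'k::field) set" where
  "edge_ideal E = Idl\<^bsub>poly_ring\<^esub> {pvar u * pvar v | u v. E u v}"

definition graph_square :: "('v \<Rightarrow> 'v \<Rightarrow> bool) \<Rightarrow> 'v \<Rightarrow> 'v \<Rightarrow> bool" where
  "graph_square E u v \<longleftrightarrow> u \<noteq> v \<and> (E u v \<or> (\<exists>w. E u w \<and> E w v))"

datatype bvert = Pth nat | Lf1 nat | Lf2 nat

text \<open>Double broom P(n1-1,k,n2-1): path Pth 0,...,Pth (k-1) (= p_1..p_k),
  n1-1 leaves Lf1 j attached to Pth 0, n2-1 leaves Lf2 j attached to Pth (k-1).\<close>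
definition double_broom_V :: "nat \<Rightarrow> nat \<Rightarrow> nat \<Rightarrow> bvert set" where
  "double_broom_V n1 k n2 =
     {Pth i | i. i < k} \<union> {Lf1 j | j. j < n1 - 1} \<union> {Lf2 j | j. j < n2 - 1}"

definition double_broom_E0 :: "nat \<Rightarrow> nat \<Rightarrow> nat \<Rightarrow> bvert \<Rightarrow> bvert \<Rightarrow> bool" where
  "double_broom_E0 n1 k n2 a b \<longleftrightarrow>
     (\<exists>i. Suc i < k \<and> a = Pth i \<and> b = Pth (Suc i)) \<or>
     (\<exists>j. j < n1 - 1 \<and> a = Pth 0 \<and> b = Lf1 j) \<or>
     (\<exists>j. j < n2 - 1 \<and> a = Pth (k - 1) \<and> b = Lf2 j)"

definition double_broom_E :: "nat \<Rightarrow> nat \<Rightarrow> nat \<Rightarrow> bvert \<Rightarrow> bvert \<Rightarrow> bool" where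
  "double_broom_E n1 k n2 a b \<longleftrightarrow> double_broom_E0 n1 k n2 a b \<or> double_broom_E0 n1 k n2 b a"

end

theory Submission
  imports Defs
begin

type_synonym ('v,'k) mpoly = "('v \<Rightarrow>\<^sub>0 nat) \<Rightarrow>\<^sub>0 'k"

lemma poly_ring_cring: "cring (poly_ring :: ('v,'k::field) mpoly ring)"
  unfolding poly_ring_def
  apply (rule cringI)
    apply (rule abelian_groupI)
          apply (auto simp: algebra_simps)
    apply (rule_tac x="-x" in exI, simp)
   apply (rule comm_monoidI)
  apply (auto simp: algebra_simps)
  done

lemma poly_ring_simps [simp]:
  "carrier (poly_ring :: ('v,'k::field) mpoly ring) = UNIV"
  "mult (poly_ring :: ('v,'k::field) mpoly ring) = (*)"
  "add (poly_ring :: ('v,'k::field) mpoly ring) = (+)"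
  "one (poly_ring :: ('v,'k::field) mpoly ring) = 1"
  "zero (poly_ring :: ('v,'k::field) mpoly ring) = 0"
  by (simp_all add: poly_ring_def)

lemma poly_ring_ainv: "a_inv (poly_ring :: ('v,'k::field) mpoly ring) a = - a"
proof -
  interpret cring "poly_ring :: ('v,'k::field) mpoly ring" by (rule poly_ring_cring)
  show ?thesis using minus_equality[of "-a" a] by simp
qed

definition pideal :: "('v,'k::field) mpoly set \<Rightarrow> bool" where
  "pideal P \<longleftrightarrow> 0 \<in> P \<and> (\<forall>a\<in>P. \<forall>b\<in>P. a + b \<in> P) \<and> (\<forall>a\<in>P. \<forall>c. c * a \<in> P)"

definition pprime :: "('v,'k::field) mpoly set \<Rightarrow> bool" where
  "pprime P \<longleftrightarrow> pideal P \<and> 1 \<notin> P \<and> (\<forall>a b. a * b \<in> P \<longrightarrow> a \<in> P \<or> b \<in> P)"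

lemma primeideal_pprime:
  assumes "primeideal P (poly_ring :: ('v,'k::field) mpoly ring)"
  shows "pprime P"
proof -
  interpret primeideal P "poly_ring :: ('v,'k::field) mpoly ring" by fact
  have AS: "additive_subgroup P poly_ring" using is_ideal ideal.axioms(1) by blast
  have "1 \<notin> P" using one_imp_carrier I_notcarr by (metis poly_ring_simps(4))
  moreover have "pideal P" unfolding pideal_def
    using additive_subgroup.zero_closed[OF AS] additive_subgroup.a_closed[OF AS] I_l_closed by (metis UNIV_I poly_ring_simps)
  moreover have "\<forall>a b. a * b \<in> P \<longrightarrow> a \<in> P \<or> b \<in> P"
    using I_prime by (metis UNIV_I poly_ring_simps)
  ultimately show ?thesis unfolding pprime_def by blast
qed

lemma pideal_neg: "pideal P \<Longrightarrow> a \<in> P \<Longrightarrow> - a \<in> P"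
  unfolding pideal_def by (metis mult_minus1)

lemma pideal_diff: "pideal P \<Longrightarrow> a \<in> P \<Longrightarrow> b \<in> P \<Longrightarrow> a - b \<in> P"
  using pideal_neg[of P b] unfolding pideal_def by (metis diff_conv_add_uminus)

lemma pideal_mult_right: "pideal P \<Longrightarrow> a \<in> P \<Longrightarrow> a * c \<in> P"
  unfolding pideal_def by (metis mult.commute)

lemma pideal_sum: "pideal P \<Longrightarrow> (\<And>x. x \<in> A \<Longrightarrow> f x \<in> P) \<Longrightarrow> sum f A \<in> P"
  by (induction A rule: infinite_finite_induct) (auto simp: pideal_def)

lemma pprime_primeideal:
  assumes "pprime (P :: ('v,'k::field) mpoly set)"
  shows "primeideal P poly_ring"
proof (rule primeidealI)
  interpret cring "poly_ring :: ('v,'k::field) mpoly ring" by (rule poly_ring_cring)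
  have pi: "pideal P" using assms pprime_def by blast
  show "cring (poly_ring :: ('v,'k::field) mpoly ring)" by (rule poly_ring_cring)
  show "ideal P poly_ring"
  proof (rule idealI)
    show "ring (poly_ring :: ('v,'k::field) mpoly ring)" by (rule ring_axioms)
    show "subgroup P (add_monoid poly_ring)"
    proof
      show "P \<subseteq> carrier (add_monoid poly_ring)" by simp
      show "\<And>x y. x \<in> P \<Longrightarrow> y \<in> P \<Longrightarrow> x \<otimes>\<^bsub>add_monoid poly_ring\<^esub> y \<in> P"
        using pi unfolding pideal_def by simp
      show "\<one>\<^bsub>add_monoid poly_ring\<^esub> \<in> P" using pi unfolding pideal_def by simp
      show "\<And>x. x \<in> P \<Longrightarrow> inv\<^bsub>add_monoid poly_ring\<^esub> x \<in> P"
        using pideal_neg[OF pi] poly_ring_ainv unfolding a_inv_def by metis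
    qed
    show "\<And>a x. a \<in> P \<Longrightarrow> x \<in> carrier poly_ring \<Longrightarrow> x \<otimes>\<^bsub>poly_ring\<^esub> a \<in> P"
      using pi unfolding pideal_def by simp
    show "\<And>a x. a \<in> P \<Longrightarrow> x \<in> carrier poly_ring \<Longrightarrow> a \<otimes>\<^bsub>poly_ring\<^esub> x \<in> P"
      using pideal_mult_right[OF pi] by simp
  qed
  show "carrier poly_ring \<noteq> P" using assms unfolding pprime_def by auto
  show "\<And>a b. a \<in> carrier poly_ring \<Longrightarrow> b \<in> carrier poly_ring \<Longrightarrow> a \<otimes>\<^bsub>poly_ring\<^esub> b \<in> P \<Longrightarrow> a \<in> P \<or> b \<in> P"
    using assms unfolding pprime_def by simp
qed

lemma mono_expansion: "p = (\<Sum>m\<in>Poly_Mapping.keys p. Poly_Mapping.single m (Poly_Mapping.lookup p m))"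
proof (rule poly_mapping_eqI)
  fix k
  have "Poly_Mapping.lookup (\<Sum>m\<in>Poly_Mapping.keys p. Poly_Mapping.single m (Poly_Mapping.lookup p m)) k
        = (\<Sum>m\<in>Poly_Mapping.keys p. (Poly_Mapping.lookup p m when m = k))"
    by (simp add: lookup_sum lookup_single)
  also have "\<dots> = Poly_Mapping.lookup p k"
    by (cases "k \<in> Poly_Mapping.keys p") (auto simp: when_def in_keys_iff)
  finally show "Poly_Mapping.lookup p k = Poly_Mapping.lookup (\<Sum>m\<in>Poly_Mapping.keys p. Poly_Mapping.single m (Poly_Mapping.lookup p m)) k" by simp
qed

lemma keys_add_nat: "Poly_Mapping.keys (a + b :: 'v \<Rightarrow>\<^sub>0 nat) = Poly_Mapping.keys a \<union> Poly_Mapping.keys b"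
  by (auto simp: in_keys_iff lookup_add)

definition kill :: "'v set \<Rightarrow> ('v,'k::field) mpoly \<Rightarrow> ('v,'k) mpoly" where
  "kill B p = Abs_poly_mapping (\<lambda>m. if Poly_Mapping.keys m \<inter> B = {} then Poly_Mapping.lookup p m else 0)"

lemma lookup_kill: "Poly_Mapping.lookup (kill B p) m = (if Poly_Mapping.keys m \<inter> B = {} then Poly_Mapping.lookup p m else 0)"
proof -
  have "finite {m. (if Poly_Mapping.keys m \<inter> B = {} then Poly_Mapping.lookup p m else 0) \<noteq> 0}"
    by (rule finite_subset[of _ "Poly_Mapping.keys p"]) (auto simp: in_keys_iff)
  thus ?thesis unfolding kill_def by simp
qed

lemma kill_add: "kill B (p + q) = kill B p + kill B q"
  by (rule poly_mapping_eqI) (simp add: lookup_kill lookup_add)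

lemma kill_diff: "kill B (p - q) = kill B p - kill B q"
  by (rule poly_mapping_eqI) (simp add: lookup_kill lookup_minus)

lemma kill_zero [simp]: "kill B 0 = 0"
  by (rule poly_mapping_eqI) (simp add: lookup_kill)

lemma kill_idem: "kill B (kill B p) = kill B p"
  by (rule poly_mapping_eqI) (simp add: lookup_kill)

lemma kill_sum: "kill B (sum f A) = (\<Sum>x\<in>A. kill B (f x))"
  by (induction A rule: infinite_finite_induct) (auto simp: kill_add)

lemma kill_single: "kill B (Poly_Mapping.single m a) = (if Poly_Mapping.keys m \<inter> B = {} then Poly_Mapping.single m a else 0)"
  by (rule poly_mapping_eqI) (auto simp: lookup_kill lookup_single when_def)

lemma kill_one [simp]: "kill B 1 = 1"
  using kill_single[of B 0 1] by simp

lemma kill_mult_single: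
  "kill B (Poly_Mapping.single a c * Poly_Mapping.single b d) = kill B (Poly_Mapping.single a c) * kill B (Poly_Mapping.single b d)"
  by (auto simp: mult_single kill_single keys_add_nat)

lemma kill_mult: "kill B (p * q) = kill B p * kill B q"
proof -
  let ?s = "\<lambda>m. Poly_Mapping.single m (Poly_Mapping.lookup p m)"
  let ?t = "\<lambda>m. Poly_Mapping.single m (Poly_Mapping.lookup q m)"
  have "kill B (p * q) = kill B ((\<Sum>a\<in>Poly_Mapping.keys p. ?s a) * (\<Sum>b\<in>Poly_Mapping.keys q. ?t b))"
    using mono_expansion[of p] mono_expansion[of q] by simp
  also have "\<dots> = (\<Sum>a\<in>Poly_Mapping.keys p. \<Sum>b\<in>Poly_Mapping.keys q. kill B (?s a) * kill B (?t b))"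
    by (simp add: sum_product kill_sum kill_mult_single)
  also have "\<dots> = (\<Sum>a\<in>Poly_Mapping.keys p. kill B (?s a)) * (\<Sum>b\<in>Poly_Mapping.keys q. kill B (?t b))"
    by (simp add: sum_product)
  also have "\<dots> = kill B p * kill B q"
    using mono_expansion[of p] mono_expansion[of q] by (simp add: kill_sum[symmetric])
  finally show ?thesis .
qed

lemma exists_embed:
  obtains \<phi> :: "('v::finite \<Rightarrow>\<^sub>0 nat) \<Rightarrow> (nat \<Rightarrow>\<^sub>0 nat)"
  where "inj \<phi>" "\<And>a b. \<phi> (a + b) = \<phi> a + \<phi> b"
proof -
  obtain r :: "'v \<Rightarrow> nat" and n where r: "inj r"
    using finite_imp_inj_to_nat_seg[OF finite_UNIV[where 'a='v]] by blast
  define \<phi> where "\<phi> m = Abs_poly_mapping (\<lambda>i. if i \<in> range r then Poly_Mapping.lookup m (inv_into UNIV r i) else 0)"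
    for m :: "'v \<Rightarrow>\<^sub>0 nat"
  have L: "Poly_Mapping.lookup (\<phi> m) i = (if i \<in> range r then Poly_Mapping.lookup m (inv_into UNIV r i) else 0)" for m i
  proof -
    have "finite {i. (if i \<in> range r then Poly_Mapping.lookup m (inv_into UNIV r i) else 0) \<noteq> 0}"
      by (rule finite_subset[of _ "range r"]) auto
    thus ?thesis unfolding \<phi>_def by simp
  qed
  have "inj \<phi>"
  proof (rule injI)
    fix a b assume "\<phi> a = \<phi> b"
    hence "Poly_Mapping.lookup (\<phi> a) (r v) = Poly_Mapping.lookup (\<phi> b) (r v)" for v by simp
    hence "Poly_Mapping.lookup a v = Poly_Mapping.lookup b v" for v using L r by simp
    thus "a = b" by (simp add: poly_mapping_eqI)
  qed
  moreover have "\<phi> (a + b) = \<phi> a + \<phi> b" for a b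
    by (rule poly_mapping_eqI) (simp add: L lookup_add)
  ultimately show ?thesis using that by blast
qed

lemma keys_minus_single:
  "Poly_Mapping.keys (p - Poly_Mapping.single a (Poly_Mapping.lookup p a)) \<subseteq> Poly_Mapping.keys p - {a}"
  by (auto simp: in_keys_iff lookup_minus lookup_single when_def split: if_splits)

lemma poly_nzd:
  fixes p q :: "('v::finite, 'k::field) mpoly"
  assumes "p \<noteq> 0" "q \<noteq> 0"
  shows "p * q \<noteq> 0"
proof -
  obtain \<phi> :: "('v \<Rightarrow>\<^sub>0 nat) \<Rightarrow> (nat \<Rightarrow>\<^sub>0 nat)" where inj: "inj \<phi>" and add: "\<And>a b. \<phi> (a + b) = \<phi> a + \<phi> b"
    using exists_embed by blast
  have mx: "\<exists>a\<in>Poly_Mapping.keys f. \<forall>a'\<in>Poly_Mapping.keys f. \<phi> a' \<le> \<phi> a" if "f \<noteq> 0" for f :: "('v, 'k) mpoly"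
  proof -
    have "finite (\<phi> ` Poly_Mapping.keys f)" "\<phi> ` Poly_Mapping.keys f \<noteq> {}" using that by auto
    hence "Max (\<phi> ` Poly_Mapping.keys f) \<in> \<phi> ` Poly_Mapping.keys f" by (rule Max_in)
    then obtain a where "a \<in> Poly_Mapping.keys f" "\<phi> a = Max (\<phi> ` Poly_Mapping.keys f)" by auto
    thus ?thesis using \<open>finite (\<phi> ` Poly_Mapping.keys f)\<close> by (metis Max_ge imageI)
  qed
  obtain a where a: "a \<in> Poly_Mapping.keys p" "\<And>a'. a' \<in> Poly_Mapping.keys p \<Longrightarrow> \<phi> a' \<le> \<phi> a" using mx[OF assms(1)] by blast
  obtain b where b: "b \<in> Poly_Mapping.keys q" "\<And>b'. b' \<in> Poly_Mapping.keys q \<Longrightarrow> \<phi> b' \<le> \<phi> b" using mx[OF assms(2)] by blast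
  define pa where "pa = Poly_Mapping.lookup p a"
  define qb where "qb = Poly_Mapping.lookup q b"
  define p' where "p' = p - Poly_Mapping.single a pa"
  define q' where "q' = q - Poly_Mapping.single b qb"
  have kp': "Poly_Mapping.keys p' \<subseteq> Poly_Mapping.keys p - {a}" unfolding p'_def pa_def by (rule keys_minus_single)
  have kq': "Poly_Mapping.keys q' \<subseteq> Poly_Mapping.keys q - {b}" unfolding q'_def qb_def by (rule keys_minus_single)
  have "p * q = Poly_Mapping.single a pa * Poly_Mapping.single b qb + Poly_Mapping.single a pa * q'
      + p' * Poly_Mapping.single b qb + p' * q'"
    unfolding p'_def q'_def by (simp add: algebra_simps)
  moreover have "Poly_Mapping.lookup (Poly_Mapping.single a pa * q') (a + b) = 0"
  proof -
    have "a + b \<notin> Poly_Mapping.keys (Poly_Mapping.single a pa * q')"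
    proof
      assume "a + b \<in> Poly_Mapping.keys (Poly_Mapping.single a pa * q')"
      then obtain x y where "x \<in> Poly_Mapping.keys (Poly_Mapping.single a pa)" "y \<in> Poly_Mapping.keys q'" "a + b = x + y"
        using keys_mult by blast
      thus False using kq' by (auto split: if_splits)
    qed
    thus ?thesis by (simp add: in_keys_iff)
  qed
  moreover have "Poly_Mapping.lookup (p' * Poly_Mapping.single b qb) (a + b) = 0"
  proof -
    have "a + b \<notin> Poly_Mapping.keys (p' * Poly_Mapping.single b qb)"
    proof
      assume "a + b \<in> Poly_Mapping.keys (p' * Poly_Mapping.single b qb)"
      then obtain x y where "x \<in> Poly_Mapping.keys p'" "y \<in> Poly_Mapping.keys (Poly_Mapping.single b qb)" "a + b = x + y"
        using keys_mult by blast
      thus False using kp' by (auto split: if_splits)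
    qed
    thus ?thesis by (simp add: in_keys_iff)
  qed
  moreover have "Poly_Mapping.lookup (p' * q') (a + b) = 0"
  proof -
    have "a + b \<notin> Poly_Mapping.keys (p' * q')"
    proof
      assume "a + b \<in> Poly_Mapping.keys (p' * q')"
      then obtain x y where xy: "x \<in> Poly_Mapping.keys p'" "y \<in> Poly_Mapping.keys q'" "a + b = x + y"
        using keys_mult by blast
      have "\<phi> x < \<phi> a" using xy(1) kp' a(2)[of x] inj by (metis DiffE inj_eq insertCI order_le_less subsetD)
      moreover have "\<phi> y \<le> \<phi> b" using xy(2) kq' b(2) by blast
      ultimately have "\<phi> x + \<phi> y < \<phi> a + \<phi> b" by (rule add_less_le_mono)
      moreover have "\<phi> x + \<phi> y = \<phi> a + \<phi> b" using xy(3) add by metis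
      ultimately show False by simp
    qed
    thus ?thesis by (simp add: in_keys_iff)
  qed
  ultimately have "Poly_Mapping.lookup (p * q) (a + b) = pa * qb"
    by (simp add: lookup_add mult_single)
  moreover have "pa \<noteq> 0" "qb \<noteq> 0" using a b by (auto simp: pa_def qb_def in_keys_iff)
  ultimately show ?thesis by auto
qed

definition mprime :: "'v set \<Rightarrow> ('v,'k::field) mpoly set" where
  "mprime B = {p. kill B p = 0}"

lemma pprime_mprime: "pprime (mprime B :: ('v::finite,'k::field) mpoly set)"
  unfolding pprime_def pideal_def mprime_def
  by (auto simp: kill_add kill_mult) (metis poly_nzd)

lemma mprime_mono: "B \<subseteq> B' \<Longrightarrow> mprime B \<subseteq> mprime B'"
  unfolding mprime_def
proof clarify
  fix p assume BB: "B \<subseteq> B'" and k: "kill B p = 0"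
  show "kill B' p = 0"
  proof (rule poly_mapping_eqI)
    fix m
    have "Poly_Mapping.lookup (kill B p) m = 0" using k by simp
    thus "Poly_Mapping.lookup (kill B' p) m = Poly_Mapping.lookup 0 m"
      using BB by (auto simp: lookup_kill split: if_splits)
  qed
qed

lemma kill_pvar: "kill B (pvar v) = (if v \<in> B then 0 else pvar v)"
  unfolding pvar_def by (simp add: kill_single)

lemma pvar_nonzero: "pvar v \<noteq> 0"
  unfolding pvar_def by (metis lookup_single_eq one_neq_zero lookup_zero)

lemma pvar_mprime: "pvar v \<in> mprime B \<longleftrightarrow> v \<in> B"
  unfolding mprime_def by (simp add: kill_pvar pvar_nonzero)

lemma single_as_pvar_mult:
  assumes "v \<in> Poly_Mapping.keys m"
  shows "Poly_Mapping.single m c = Poly_Mapping.single (m - Poly_Mapping.single v 1) c * (pvar v :: ('v,'k::field) mpoly)"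
proof -
  have "m - Poly_Mapping.single v 1 + Poly_Mapping.single v 1 = m"
    using assms
    by (intro poly_mapping_eqI) (auto simp: lookup_add minus_poly_mapping.rep_eq lookup_single when_def in_keys_iff)
  thus ?thesis unfolding pvar_def by (simp add: mult_single)
qed

lemma kill_zero_in_ideal:
  assumes Q: "pideal Q" and C: "\<And>v. v \<in> C \<Longrightarrow> pvar v \<in> Q" and k: "kill C p = 0"
  shows "p \<in> Q"
proof -
  have "Poly_Mapping.single m (Poly_Mapping.lookup p m) \<in> Q" if m: "m \<in> Poly_Mapping.keys p" for m
  proof -
    have "Poly_Mapping.keys m \<inter> C \<noteq> {}"
    proof
      assume "Poly_Mapping.keys m \<inter> C = {}"
      hence "Poly_Mapping.lookup (kill C p) m = Poly_Mapping.lookup p m" by (simp add: lookup_kill)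
      thus False using k m by (simp add: in_keys_iff)
    qed
    then obtain v where v: "v \<in> Poly_Mapping.keys m" "v \<in> C" by blast
    show ?thesis using single_as_pvar_mult[OF v(1)] C[OF v(2)] Q unfolding pideal_def by metis
  qed
  hence "(\<Sum>m\<in>Poly_Mapping.keys p. Poly_Mapping.single m (Poly_Mapping.lookup p m)) \<in> Q"
    by (intro pideal_sum[OF Q]) auto
  thus ?thesis using mono_expansion[of p] by simp
qed

definition pconst :: "'k \<Rightarrow> ('v,'k::field) mpoly" where
  "pconst a = Poly_Mapping.single 0 a"

lemma pconst_mult: "pconst a * pconst b = pconst (a * b)"
  unfolding pconst_def by (simp add: mult_single)

lemma pconst_zero [simp]: "pconst 0 = 0" unfolding pconst_def by simp
lemma pconst_one [simp]: "pconst 1 = 1" unfolding pconst_def by simp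

lemma pprime_pow: "pprime P \<Longrightarrow> x \<notin> P \<Longrightarrow> x ^ n \<notin> P"
  by (induction n) (auto simp: pprime_def)

lemma pideal_pow: "pideal P \<Longrightarrow> x \<in> P \<Longrightarrow> n > 0 \<Longrightarrow> x ^ n \<in> P"
  by (cases n) (auto simp: pideal_mult_right mult.commute)

lemma chain_dep:
  fixes y :: "nat \<Rightarrow> ('v,'k::field) mpoly" and c :: "(nat \<Rightarrow> nat) \<Rightarrow> 'k"
  assumes "\<And>i. i \<le> m \<Longrightarrow> pprime (Q i)"
    and "\<And>i. i < m \<Longrightarrow> Q i \<subseteq> Q (Suc i) \<and> y i \<in> Q (Suc i) \<and> y i \<notin> Q i"
    and "finite J" and "\<And>\<alpha> i. \<alpha> \<in> J \<Longrightarrow> m \<le> i \<Longrightarrow> \<alpha> i = 0"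
    and "\<exists>\<alpha>\<in>J. c \<alpha> \<noteq> 0"
    and "(\<Sum>\<alpha>\<in>J. pconst (c \<alpha>) * (\<Prod>i<m. y i ^ \<alpha> i)) \<in> Q 0"
  shows False
  using assms
proof (induction m arbitrary: Q y J c)
  case 0
  obtain \<alpha> where \<alpha>: "\<alpha> \<in> J" "c \<alpha> \<noteq> 0" using "0.prems"(5) by blast
  have J: "J = {\<lambda>_. 0}"
  proof -
    have "\<beta> = (\<lambda>_. 0)" if "\<beta> \<in> J" for \<beta> using "0.prems"(4)[OF that] by auto
    thus ?thesis using \<alpha> by blast
  qed
  hence z: "\<alpha> = (\<lambda>_. 0)" using \<alpha> by blast
  have "pconst (c \<alpha>) \<in> Q 0" using "0.prems"(6) J z by simp
  hence "pconst (inverse (c \<alpha>)) * pconst (c \<alpha>) \<in> Q 0"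
    using "0.prems"(1)[of 0] unfolding pprime_def pideal_def by blast
  hence "1 \<in> Q 0" using \<alpha>(2) by (simp add: pconst_mult)
  thus False using "0.prems"(1)[of 0] unfolding pprime_def by blast
next
  case (Suc m)
  note pr = Suc.prems
  define J0 where "J0 = {\<alpha>\<in>J. c \<alpha> \<noteq> 0}"
  have fJ0: "finite J0" using pr(3) unfolding J0_def by simp
  have neJ0: "J0 \<noteq> {}" using pr(5) unfolding J0_def by blast
  define a where "a = Min ((\<lambda>\<alpha>. \<alpha> 0) ` J0)"
  have a_le: "a \<le> \<alpha> 0" if "\<alpha> \<in> J0" for \<alpha> unfolding a_def using fJ0 that by simp
  have "a \<in> (\<lambda>\<alpha>. \<alpha> 0) ` J0" unfolding a_def using fJ0 neJ0 by (intro Min_in) auto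
  define J1 where "J1 = {\<alpha>\<in>J0. \<alpha> 0 = a}"
  have neJ1: "J1 \<noteq> {}" using \<open>a \<in> _\<close> unfolding J1_def by auto
  define T where "T \<alpha> = (\<Prod>i<m. y (Suc i) ^ \<alpha> (Suc i))" for \<alpha>
  have S0: "(\<Sum>\<alpha>\<in>J. pconst (c \<alpha>) * (\<Prod>i<Suc m. y i ^ \<alpha> i))
          = (\<Sum>\<alpha>\<in>J0. pconst (c \<alpha>) * (\<Prod>i<Suc m. y i ^ \<alpha> i))"
    unfolding J0_def by (rule sum.mono_neutral_right) (use pr(3) in auto)
  define R where "R = (\<Sum>\<alpha>\<in>J0. pconst (c \<alpha>) * (y 0 ^ (\<alpha> 0 - a) * T \<alpha>))"
  have "(\<Sum>\<alpha>\<in>J0. pconst (c \<alpha>) * (\<Prod>i<Suc m. y i ^ \<alpha> i)) = y 0 ^ a * R"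
    unfolding R_def sum_distrib_left
  proof (rule sum.cong[OF refl])
    fix \<alpha> assume "\<alpha> \<in> J0"
    hence "\<alpha> 0 = a + (\<alpha> 0 - a)" using a_le by simp
    hence "y 0 ^ \<alpha> 0 = y 0 ^ a * y 0 ^ (\<alpha> 0 - a)" by (metis power_add)
    thus "pconst (c \<alpha>) * (\<Prod>i<Suc m. y i ^ \<alpha> i) = y 0 ^ a * (pconst (c \<alpha>) * (y 0 ^ (\<alpha> 0 - a) * T \<alpha>))"
      unfolding T_def prod.lessThan_Suc_shift by (simp add: algebra_simps)
  qed
  hence "y 0 ^ a * R \<in> Q 0" using pr(6) S0 by simp
  moreover have "y 0 ^ a \<notin> Q 0" using pprime_pow[OF pr(1)[of 0]] pr(2)[of 0] by simp
  ultimately have "R \<in> Q 0" using pr(1)[of 0] unfolding pprime_def by blast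
  hence R1: "R \<in> Q 1" using pr(2)[of 0] by auto
  have pi1: "pideal (Q 1)" using pr(1)[of 1] pprime_def by auto
  define R2 where "R2 = (\<Sum>\<alpha>\<in>J0 - J1. pconst (c \<alpha>) * (y 0 ^ (\<alpha> 0 - a) * T \<alpha>))"
  have R2: "R2 \<in> Q 1" unfolding R2_def
  proof (rule pideal_sum[OF pi1])
    fix \<alpha> assume "\<alpha> \<in> J0 - J1"
    hence "\<alpha> 0 - a > 0" using a_le unfolding J1_def by force
    hence "y 0 ^ (\<alpha> 0 - a) \<in> Q 1" using pideal_pow[OF pi1] pr(2)[of 0] by simp
    thus "pconst (c \<alpha>) * (y 0 ^ (\<alpha> 0 - a) * T \<alpha>) \<in> Q 1"
      using pi1 pideal_mult_right[OF pi1] unfolding pideal_def by blast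
  qed
  have "R = (\<Sum>\<alpha>\<in>J1. pconst (c \<alpha>) * T \<alpha>) + R2"
  proof -
    have "R = (\<Sum>\<alpha>\<in>J1. pconst (c \<alpha>) * (y 0 ^ (\<alpha> 0 - a) * T \<alpha>)) + R2"
      unfolding R_def R2_def using fJ0 by (metis (no_types, lifting) J1_def add.commute mem_Collect_eq subsetI sum.subset_diff)
    moreover have "(\<Sum>\<alpha>\<in>J1. pconst (c \<alpha>) * (y 0 ^ (\<alpha> 0 - a) * T \<alpha>)) = (\<Sum>\<alpha>\<in>J1. pconst (c \<alpha>) * T \<alpha>)"
      by (rule sum.cong) (auto simp: J1_def)
    ultimately show ?thesis by simp
  qed
  hence R'1: "(\<Sum>\<alpha>\<in>J1. pconst (c \<alpha>) * T \<alpha>) \<in> Q 1"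
    using pideal_diff[OF pi1 R1 R2] by simp
  define sh where "sh \<alpha> = (\<lambda>i. \<alpha> (Suc i))" for \<alpha> :: "nat \<Rightarrow> nat"
  have inj: "inj_on sh J1"
  proof (rule inj_onI)
    fix \<alpha> \<beta> assume ab: "\<alpha> \<in> J1" "\<beta> \<in> J1" "sh \<alpha> = sh \<beta>"
    show "\<alpha> = \<beta>"
    proof
      fix i show "\<alpha> i = \<beta> i"
        using ab unfolding J1_def sh_def by (cases i) (auto dest: fun_cong)
    qed
  qed
  define c' where "c' \<beta> = c (the_inv_into J1 sh \<beta>)" for \<beta>
  have sumeq: "(\<Sum>\<beta>\<in>sh ` J1. pconst (c' \<beta>) * (\<Prod>i<m. y (Suc i) ^ \<beta> i)) = (\<Sum>\<alpha>\<in>J1. pconst (c \<alpha>) * T \<alpha>)"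
    apply (subst sum.reindex[OF inj])
    apply (rule sum.cong[OF refl])
    subgoal for \<alpha> unfolding c'_def comp_def using the_inv_into_f_f[OF inj, of \<alpha>] by (simp add: T_def sh_def)
    done
  show False
  proof (rule Suc.IH[of "\<lambda>i. Q (Suc i)" "\<lambda>i. y (Suc i)" "sh ` J1" c'])
    show "\<And>i. i \<le> m \<Longrightarrow> pprime (Q (Suc i))" using pr(1) by simp
    show "\<And>i. i < m \<Longrightarrow> Q (Suc i) \<subseteq> Q (Suc (Suc i)) \<and> y (Suc i) \<in> Q (Suc (Suc i)) \<and> y (Suc i) \<notin> Q (Suc i)"
      using pr(2) by simp
    show "finite (sh ` J1)" using fJ0 unfolding J1_def by simp
    show "\<And>\<beta> i. \<beta> \<in> sh ` J1 \<Longrightarrow> m \<le> i \<Longrightarrow> \<beta> i = 0"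
      using pr(4) unfolding J1_def J0_def sh_def by auto
    show "\<exists>\<beta>\<in>sh ` J1. c' \<beta> \<noteq> 0"
    proof -
      obtain \<alpha> where "\<alpha> \<in> J1" using neJ1 by blast
      hence "c' (sh \<alpha>) \<noteq> 0" unfolding c'_def using the_inv_into_f_f[OF inj, of \<alpha>] by (simp add: J1_def J0_def)
      thus ?thesis using \<open>\<alpha> \<in> J1\<close> by blast
    qed
    show "(\<Sum>\<beta>\<in>sh ` J1. pconst (c' \<beta>) * (\<Prod>i<m. y (Suc i) ^ \<beta> i)) \<in> Q (Suc 0)"
      using sumeq R'1 by simp
  qed
qed

lemma lookup_pconst_mult: "Poly_Mapping.lookup (pconst a * p) m = a * Poly_Mapping.lookup p m"
  unfolding pconst_def mult_map_scale_conv_mult[symmetric] by (simp add: map.rep_eq when_def)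

lemma lin_dep:
  fixes g :: "'j \<Rightarrow> 'm \<Rightarrow> 'k::field"
  assumes "finite K" "finite J" "card K < card J" "\<And>j m. j \<in> J \<Longrightarrow> m \<notin> K \<Longrightarrow> g j m = 0"
  shows "\<exists>c. (\<exists>j\<in>J. c j \<noteq> 0) \<and> (\<forall>m. (\<Sum>j\<in>J. c j * g j m) = 0)"
  using assms
proof (induction K arbitrary: J g rule: finite_induct)
  case empty
  then obtain j0 where j0: "j0 \<in> J" by fastforce
  define c where "c j = (if j = j0 then 1 else (0::'k))" for j
  have "(\<Sum>j\<in>J. c j * g j m) = 0" for m
    using empty.prems j0 by (simp add: c_def)
  thus ?case using j0 by (metis c_def one_neq_zero)
next
  case (insert m0 K)
  show ?case
  proof (cases "\<forall>j\<in>J. g j m0 = 0")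
    case True
    show ?thesis
    proof (rule insert.IH)
      show "finite J" by fact
      show "card K < card J" using insert by simp
      show "\<And>j m. j \<in> J \<Longrightarrow> m \<notin> K \<Longrightarrow> g j m = 0" using True insert.prems by (metis insertE)
    qed
  next
    case False
    then obtain j0 where j0: "j0 \<in> J" "g j0 m0 \<noteq> 0" by blast
    define J' where "J' = J - {j0}"
    define h where "h j m = g j m - (g j m0 / g j0 m0) * g j0 m" for j m
    obtain c' where c': "\<exists>j\<in>J'. c' j \<noteq> 0" "\<And>m. (\<Sum>j\<in>J'. c' j * h j m) = 0"
    proof -
      have "\<exists>c. (\<exists>j\<in>J'. c j \<noteq> 0) \<and> (\<forall>m. (\<Sum>j\<in>J'. c j * h j m) = 0)"
      proof (rule insert.IH)
        show "finite J'" using insert.prems unfolding J'_def by simp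
        show "card K < card J'" using insert j0 unfolding J'_def by simp
        show "h j m = 0" if "j \<in> J'" "m \<notin> K" for j m
          using that insert.prems(3) j0 unfolding h_def J'_def by (cases "m = m0") auto
      qed
      thus ?thesis using that by blast
    qed
    define c where "c j = (if j = j0 then - (\<Sum>j'\<in>J'. c' j' * (g j' m0 / g j0 m0)) else c' j)" for j
    have "(\<Sum>j\<in>J. c j * g j m) = 0" for m
    proof -
      have "(\<Sum>j\<in>J. c j * g j m) = c j0 * g j0 m + (\<Sum>j\<in>J'. c' j * g j m)"
        unfolding J'_def using j0 insert.prems(1) by (simp add: sum.remove c_def)
      also have "\<dots> = (\<Sum>j\<in>J'. c' j * h j m)"
        unfolding c_def h_def by (simp add: sum_distrib_right sum_distrib_left sum_subtractf sum_divide_distrib algebra_simps)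
      finally show ?thesis using c' by simp
    qed
    moreover have "\<exists>j\<in>J. c j \<noteq> 0" using c'(1) unfolding c_def J'_def by auto
    ultimately show ?thesis by blast
  qed
qed

definition bnd :: "'v set \<Rightarrow> nat \<Rightarrow> ('v,'k::field) mpoly \<Rightarrow> bool" where
  "bnd W B p \<longleftrightarrow> (\<forall>m\<in>Poly_Mapping.keys p. Poly_Mapping.keys m \<subseteq> W \<and> (\<forall>v. Poly_Mapping.lookup m v \<le> B))"

lemma bnd_mono: "bnd W B p \<Longrightarrow> B \<le> B' \<Longrightarrow> bnd W B' p"
  unfolding bnd_def by (meson order_trans)

lemma bnd_one: "bnd W 0 1"
  unfolding bnd_def by simp

lemma bnd_mult: "bnd W B1 p \<Longrightarrow> bnd W B2 q \<Longrightarrow> bnd W (B1 + B2) (p * q)"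
  unfolding bnd_def
proof clarify
  fix m assume p: "\<forall>m\<in>Poly_Mapping.keys p. Poly_Mapping.keys m \<subseteq> W \<and> (\<forall>v. Poly_Mapping.lookup m v \<le> B1)"
    and q: "\<forall>m\<in>Poly_Mapping.keys q. Poly_Mapping.keys m \<subseteq> W \<and> (\<forall>v. Poly_Mapping.lookup m v \<le> B2)"
    and m: "m \<in> Poly_Mapping.keys (p * q)"
  then obtain a b where ab: "a \<in> Poly_Mapping.keys p" "b \<in> Poly_Mapping.keys q" "m = a + b"
    using keys_mult by blast
  show "Poly_Mapping.keys m \<subseteq> W \<and> (\<forall>v. Poly_Mapping.lookup m v \<le> B1 + B2)"
    using p q ab keys_add[of a b] by (fastforce simp: lookup_add add_mono)
qed

lemma bnd_pow: "bnd W B p \<Longrightarrow> bnd W (n * B) (p ^ n)"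
  by (induction n) (auto simp: bnd_one intro: bnd_mult[of W B p "n*B" for n, simplified add.commute])

lemma bnd_prod: "finite I \<Longrightarrow> (\<And>i. i \<in> I \<Longrightarrow> bnd W (Bf i) (f i)) \<Longrightarrow> bnd W (\<Sum>i\<in>I. Bf i) (\<Prod>i\<in>I. f i)"
  by (induction I rule: finite_induct) (auto simp: bnd_one bnd_mult)

lemma bnd_exists:
  assumes "\<forall>m\<in>Poly_Mapping.keys p. Poly_Mapping.keys m \<subseteq> W"
  shows "\<exists>B. bnd W B p"
proof -
  define B where "B = (\<Sum>m\<in>Poly_Mapping.keys p. \<Sum>v\<in>Poly_Mapping.keys m. Poly_Mapping.lookup m v)"
  have "Poly_Mapping.lookup m v \<le> B" if "m \<in> Poly_Mapping.keys p" for m v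
  proof (cases "v \<in> Poly_Mapping.keys m")
    case True
    hence "Poly_Mapping.lookup m v \<le> (\<Sum>v\<in>Poly_Mapping.keys m. Poly_Mapping.lookup m v)"
      by (intro member_le_sum) auto
    also have "\<dots> \<le> B" unfolding B_def using that
      by (intro member_le_sum[where f="\<lambda>m. \<Sum>v\<in>Poly_Mapping.keys m. Poly_Mapping.lookup m v"]) auto
    finally show ?thesis .
  qed (simp add: in_keys_iff)
  thus ?thesis using assms unfolding bnd_def by blast
qed

lemma card_monos:
  assumes W: "finite W"
  shows "finite {m::'v \<Rightarrow>\<^sub>0 nat. Poly_Mapping.keys m \<subseteq> W \<and> (\<forall>v. Poly_Mapping.lookup m v \<le> B)}
     \<and> card {m::'v \<Rightarrow>\<^sub>0 nat. Poly_Mapping.keys m \<subseteq> W \<and> (\<forall>v. Poly_Mapping.lookup m v \<le> B)} \<le> (B+1) ^ card W"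
proof -
  let ?K = "{m::'v \<Rightarrow>\<^sub>0 nat. Poly_Mapping.keys m \<subseteq> W \<and> (\<forall>v. Poly_Mapping.lookup m v \<le> B)}"
  define F where "F = PiE W (\<lambda>_. {..B})"
  define \<psi> where "\<psi> f = Abs_poly_mapping (\<lambda>v. if v \<in> W then f v else (0::nat))" for f :: "'v \<Rightarrow> nat"
  have L: "Poly_Mapping.lookup (\<psi> f) = (\<lambda>v. if v \<in> W then f v else 0)" for f
  proof -
    have "finite {v. (if v \<in> W then f v else 0) \<noteq> 0}" by (rule finite_subset[OF _ W]) auto
    thus ?thesis unfolding \<psi>_def by simp
  qed
  have sub: "?K \<subseteq> \<psi> ` F"
  proof
    fix m assume m: "m \<in> ?K"
    have "restrict (Poly_Mapping.lookup m) W \<in> F" using m unfolding F_def by auto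
    moreover have "\<psi> (restrict (Poly_Mapping.lookup m) W) = m"
      using m by (intro poly_mapping_eqI) (auto simp: L in_keys_iff)
    ultimately show "m \<in> \<psi> ` F" by (metis imageI)
  qed
  have fF: "finite F" unfolding F_def using W by (simp add: finite_PiE)
  have cF: "card F = (B+1) ^ card W" unfolding F_def using W by (simp add: card_PiE)
  have "finite ?K" using sub fF finite_subset by blast
  moreover have "card ?K \<le> card (\<psi> ` F)" using sub fF by (intro card_mono) auto
  moreover have "card (\<psi> ` F) \<le> card F" using fF by (rule card_image_le)
  ultimately show ?thesis using cF by simp
qed

lemma card_exps:
  "finite {\<alpha>::nat\<Rightarrow>nat. (\<forall>i\<le>N. \<alpha> i \<le> d) \<and> (\<forall>i. N < i \<longrightarrow> \<alpha> i = 0)}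
   \<and> card {\<alpha>::nat\<Rightarrow>nat. (\<forall>i\<le>N. \<alpha> i \<le> d) \<and> (\<forall>i. N < i \<longrightarrow> \<alpha> i = 0)} = (d+1) ^ Suc N"
proof -
  let ?J = "{\<alpha>::nat\<Rightarrow>nat. (\<forall>i\<le>N. \<alpha> i \<le> d) \<and> (\<forall>i. N < i \<longrightarrow> \<alpha> i = 0)}"
  define F where "F = PiE {..N} (\<lambda>_. {..d})"
  define e where "e f = (\<lambda>i. if i \<le> N then f i else (0::nat))" for f :: "nat \<Rightarrow> nat"
  have eq: "?J = e ` F"
  proof
    show "?J \<subseteq> e ` F"
    proof
      fix \<alpha> assume a: "\<alpha> \<in> ?J"
      have "restrict \<alpha> {..N} \<in> F" using a unfolding F_def by auto
      moreover have "e (restrict \<alpha> {..N}) = \<alpha>" using a unfolding e_def by (auto simp: fun_eq_iff)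
      ultimately show "\<alpha> \<in> e ` F" by (metis imageI)
    qed
    show "e ` F \<subseteq> ?J" unfolding e_def F_def by (auto simp: PiE_iff)
  qed
  have inj: "inj_on e F"
  proof (rule inj_onI)
    fix f g assume fg: "f \<in> F" "g \<in> F" "e f = e g"
    show "f = g"
    proof
      fix i show "f i = g i"
        using fg unfolding F_def e_def
        by (cases "i \<le> N") (auto simp: PiE_iff extensional_def dest: fun_cong[of _ _ i])
    qed
  qed
  have fF: "finite F" unfolding F_def by (simp add: finite_PiE)
  have cF: "card F = (d+1) ^ Suc N" unfolding F_def by (simp add: card_PiE)
  show ?thesis using eq fF cF card_image[OF inj] by simp
qed

lemma alg_dep:
  fixes z :: "nat \<Rightarrow> ('v,'k::field) mpoly"
  assumes W: "finite W" and z: "\<And>i m. i \<le> card W \<Longrightarrow> m \<in> Poly_Mapping.keys (z i) \<Longrightarrow> Poly_Mapping.keys m \<subseteq> W"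
  shows "\<exists>J c. finite J \<and> (\<forall>\<alpha>\<in>J. \<forall>i. Suc (card W) \<le> i \<longrightarrow> \<alpha> i = 0) \<and> (\<exists>\<alpha>\<in>J. c \<alpha> \<noteq> (0::'k))
     \<and> (\<Sum>\<alpha>\<in>J. pconst (c \<alpha>) * (\<Prod>i<Suc (card W). z i ^ \<alpha> i)) = 0"
proof -
  define N where "N = card W"
  have "\<forall>i. \<exists>B. i \<le> N \<longrightarrow> bnd W B (z i)" using bnd_exists z unfolding N_def by blast
  then obtain Bf where Bf: "\<And>i. i \<le> N \<Longrightarrow> bnd W (Bf i) (z i)" by metis
  define D where "D = (\<Sum>i\<le>N. Bf i)"
  have zD: "bnd W D (z i)" if "i \<le> N" for i
    using Bf[OF that] by (rule bnd_mono) (use that in \<open>auto simp: D_def intro: member_le_sum\<close>)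
  define E where "E = Suc N * D + 1"
  define d where "d = E ^ N"
  define B where "B = Suc N * d * D"
  define J where "J = {\<alpha>::nat\<Rightarrow>nat. (\<forall>i\<le>N. \<alpha> i \<le> d) \<and> (\<forall>i. N < i \<longrightarrow> \<alpha> i = 0)}"
  define K where "K = {m::'v \<Rightarrow>\<^sub>0 nat. Poly_Mapping.keys m \<subseteq> W \<and> (\<forall>v. Poly_Mapping.lookup m v \<le> B)}"
  define P where "P \<alpha> = (\<Prod>i<Suc N. z i ^ \<alpha> i)" for \<alpha>
  have fJ: "finite J" and cJ: "card J = (d+1) ^ Suc N" using card_exps[of N d] unfolding J_def by auto
  have fK: "finite K" and cK: "card K \<le> (B+1) ^ N" using card_monos[OF W, of B] unfolding K_def N_def by auto
  have PB: "bnd W B (P \<alpha>)" if "\<alpha> \<in> J" for \<alpha>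
  proof -
    have "bnd W (\<Sum>i<Suc N. \<alpha> i * D) (P \<alpha>)" unfolding P_def
      by (rule bnd_prod) (simp_all add: bnd_pow zD less_Suc_eq_le)
    moreover have "(\<Sum>i<Suc N. \<alpha> i * D) \<le> (\<Sum>i<Suc N. d * D)"
      using that unfolding J_def by (intro sum_mono mult_right_mono) auto
    moreover have "(\<Sum>i<Suc N. d * D) = B" unfolding B_def by (simp add: algebra_simps)
    ultimately show ?thesis by (metis bnd_mono)
  qed
  have vanish: "Poly_Mapping.lookup (P \<alpha>) m = 0" if "\<alpha> \<in> J" "m \<notin> K" for \<alpha> m
    using PB[OF that(1)] that(2) unfolding bnd_def K_def by (auto simp: in_keys_iff)
  have "card K < card J"
  proof -
    have "B + 1 \<le> E * (d + 1)" unfolding B_def E_def by (simp add: algebra_simps)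
    hence "(B + 1) ^ N \<le> (E * (d+1)) ^ N" by (rule power_mono) simp
    also have "\<dots> = E ^ N * (d+1) ^ N" by (rule power_mult_distrib)
    also have "\<dots> = d * (d+1) ^ N" unfolding d_def by simp
    also have "\<dots> < (d+1) ^ Suc N" by simp
    finally show ?thesis using cK cJ by simp
  qed
  then obtain c where c: "\<exists>\<alpha>\<in>J. c \<alpha> \<noteq> 0" "\<And>m. (\<Sum>\<alpha>\<in>J. c \<alpha> * Poly_Mapping.lookup (P \<alpha>) m) = (0::'k)"
    using lin_dep[OF fK fJ, of "\<lambda>\<alpha> m. Poly_Mapping.lookup (P \<alpha>) m"] vanish by blast
  have "(\<Sum>\<alpha>\<in>J. pconst (c \<alpha>) * P \<alpha>) = 0"
    by (rule poly_mapping_eqI) (simp add: lookup_sum lookup_pconst_mult c(2))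
  moreover have "\<forall>\<alpha>\<in>J. \<forall>i. Suc N \<le> i \<longrightarrow> \<alpha> i = 0" unfolding J_def by auto
  ultimately show ?thesis using fJ c(1) unfolding P_def N_def by blast
qed

lemma chain_bound:
  fixes Q :: "nat \<Rightarrow> ('v::finite,'k::field) mpoly set"
  assumes pr: "\<And>i. i \<le> n \<Longrightarrow> pprime (Q i)" and ch: "\<And>i. i < n \<Longrightarrow> Q i \<subset> Q (Suc i)"
  shows "n \<le> card {v. pvar v \<notin> Q 0}"
proof (rule ccontr)
  define W where "W = {v. pvar v \<notin> Q 0}"
  define C where "C = {v. pvar v \<in> Q 0}"
  assume "\<not> n \<le> card {v. pvar v \<notin> Q 0}"
  hence nN: "Suc (card W) \<le> n" unfolding W_def by simp
  have mono: "Q 0 \<subseteq> Q i" if "i \<le> n" for i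
    using that proof (induction i)
    case (Suc i) thus ?case using ch[of i] by auto
  qed simp
  have pi: "pideal (Q i)" if "i \<le> n" for i using pr[OF that] pprime_def by blast
  have "\<forall>i. \<exists>y. i < n \<longrightarrow> y \<in> Q (Suc i) \<and> y \<notin> Q i" using ch by blast
  then obtain y where y: "\<And>i. i < n \<Longrightarrow> y i \<in> Q (Suc i) \<and> y i \<notin> Q i" by metis
  define z where "z i = kill C (y i)" for i
  have yz: "y i - z i \<in> Q 0" for i
  proof (rule kill_zero_in_ideal[OF pi[of 0]])
    show "kill C (y i - z i) = 0" unfolding z_def by (simp add: kill_diff kill_idem)
  qed (auto simp: C_def)
  have z: "z i \<in> Q (Suc i) \<and> z i \<notin> Q i" if "i < n" for i
  proof -
    have "y i - z i \<in> Q i" using yz[of i] mono[of i] that by auto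
    have "y i - z i \<in> Q (Suc i)" using yz[of i] mono[of "Suc i"] that by auto
    hence "z i \<in> Q (Suc i)" using pideal_diff[OF pi[of "Suc i"], of "y i" "y i - z i"] y[OF that] that by simp
    moreover have "z i \<notin> Q i"
    proof
      assume "z i \<in> Q i"
      moreover have "\<forall>a\<in>Q i. \<forall>b\<in>Q i. a + b \<in> Q i" using pi[of i] that unfolding pideal_def by simp
      ultimately have "(y i - z i) + z i \<in> Q i" using \<open>y i - z i \<in> Q i\<close> by blast
      thus False using y[OF that] by simp
    qed
    ultimately show ?thesis by blast
  qed
  have keysW: "Poly_Mapping.keys m \<subseteq> W" if "m \<in> Poly_Mapping.keys (z i)" for i m
  proof -
    have "Poly_Mapping.keys m \<inter> C = {}" using that unfolding z_def
      by (auto simp: in_keys_iff lookup_kill split: if_splits)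
    thus ?thesis unfolding W_def C_def by auto
  qed
  obtain J c where J: "finite J" "\<forall>\<alpha>\<in>J. \<forall>i. Suc (card W) \<le> i \<longrightarrow> \<alpha> i = 0" "\<exists>\<alpha>\<in>J. c \<alpha> \<noteq> (0::'k)"
    "(\<Sum>\<alpha>\<in>J. pconst (c \<alpha>) * (\<Prod>i<Suc (card W). z i ^ \<alpha> i)) = 0"
    using alg_dep[of W z, OF finite_subset[OF subset_UNIV finite_UNIV]] keysW by blast
  show False
  proof (rule chain_dep[of "Suc (card W)" Q z J c])
    show "\<And>i. i \<le> Suc (card W) \<Longrightarrow> pprime (Q i)" using pr nN by simp
    show "\<And>i. i < Suc (card W) \<Longrightarrow> Q i \<subseteq> Q (Suc i) \<and> z i \<in> Q (Suc i) \<and> z i \<notin> Q i"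
    proof -
      fix i assume "i < Suc (card W)"
      hence i: "i < n" using nN by simp
      show "Q i \<subseteq> Q (Suc i) \<and> z i \<in> Q (Suc i) \<and> z i \<notin> Q i" using ch[OF i] z[OF i] by blast
    qed
    show "finite J" by fact
    show "\<And>\<alpha> i. \<alpha> \<in> J \<Longrightarrow> Suc (card W) \<le> i \<Longrightarrow> \<alpha> i = 0" using J(2) by blast
    show "\<exists>\<alpha>\<in>J. c \<alpha> \<noteq> 0" by fact
    show "(\<Sum>\<alpha>\<in>J. pconst (c \<alpha>) * (\<Prod>i<Suc (card W). z i ^ \<alpha> i)) \<in> Q 0"
      using J(4) pi[of 0] unfolding pideal_def by simp
  qed
qed

lemma (in cring) quot_carrier_elem:
  assumes "ideal I R" "x \<in> carrier (R Quot I)"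
  obtains r where "r \<in> carrier R" "x = I +> r"
  using assms(2) unfolding FactRing_def A_RCOSETS_def'[of R I] by auto

lemma (in cring) quot_prime_vimage:
  assumes I: "ideal I R" and P: "primeideal P (R Quot I)"
  shows "primeideal {r \<in> carrier R. I +> r \<in> P} R"
  using ring_hom_ring.primeideal_vimage[OF ideal.rcos_ring_hom_ring[OF I] is_cring P] .

lemma (in cring) quot_prime_image:
  assumes I: "ideal I R" and Q: "primeideal Q R" and IQ: "I \<subseteq> Q"
  shows "primeideal ((+>) I ` Q) (R Quot I)"
proof (rule primeidealI)
  have Qi: "ideal Q R" using Q primeideal.axioms(1) by blast
  show "ideal ((+>) I ` Q) (R Quot I)" using ring_ideal_imp_quot_ideal[OF I Qi] .
  show "cring (R Quot I)" using ideal.quotient_is_cring[OF I is_cring] .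
  have sub: "(+>) I ` Q \<subseteq> carrier (R Quot I)"
    using ideal.axioms(1)[OF \<open>ideal ((+>) I ` Q) (R Quot I)\<close>] additive_subgroup.a_subset by blast
  have U: "\<Union> ((+>) I ` Q) = Q" using ideal_incl_iff[OF I Qi] IQ by blast
  show "carrier (R Quot I) \<noteq> (+>) I ` Q"
  proof
    assume h: "carrier (R Quot I) = (+>) I ` Q"
    have "I +> \<one> \<in> carrier (R Quot I)"
      unfolding FactRing_def A_RCOSETS_def'[of R I] by auto
    hence "\<one> \<in> \<Union> ((+>) I ` Q)"
      using canonical_proj_vimage_mem_iff[OF I sub, of \<one>] h by simp
    hence "\<one> \<in> Q" using U by simp
    thus False using Q primeideal.I_notcarr ideal.one_imp_carrier[OF Qi] by metis
  qed
  fix a b assume a: "a \<in> carrier (R Quot I)" and b: "b \<in> carrier (R Quot I)"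
    and ab: "a \<otimes>\<^bsub>R Quot I\<^esub> b \<in> (+>) I ` Q"
  obtain x where x: "x \<in> carrier R" "a = I +> x" using quot_carrier_elem[OF I a] .
  obtain y where y: "y \<in> carrier R" "b = I +> y" using quot_carrier_elem[OF I b] .
  have "a \<otimes>\<^bsub>R Quot I\<^esub> b = I +> (x \<otimes> y)"
    unfolding FactRing_def using x y ideal.rcoset_mult_add[OF I] by simp
  hence "x \<otimes> y \<in> Q" using canonical_proj_vimage_mem_iff[OF I sub, of "x \<otimes> y"] ab U x y by simp
  hence "x \<in> Q \<or> y \<in> Q" using primeideal.I_prime[OF Q] x y by blast
  thus "a \<in> (+>) I ` Q \<or> b \<in> (+>) I ` Q" using x y by blast
qed

lemma (in cring) krull_quot_ge:
  assumes I: "ideal I R"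
    and Q: "\<And>i. i \<le> n \<Longrightarrow> primeideal (Q i) R"
    and ch: "\<And>i. i < n \<Longrightarrow> Q i \<subset> Q (Suc i)"
    and IQ: "I \<subseteq> Q 0"
  shows "enat n \<le> krull_dim (R Quot I)"
proof -
  have mono: "Q 0 \<subseteq> Q i" if "i \<le> n" for i
    using that proof (induction i)
    case (Suc i) thus ?case using ch[of i] by auto
  qed simp
  define P where "P i = (+>) I ` Q i" for i
  have U: "\<Union> (P i) = Q i" if "i \<le> n" for i
    unfolding P_def using ideal_incl_iff[OF I primeideal.axioms(1)[OF Q[OF that]]] IQ mono[OF that] by blast
  have "(\<forall>i\<le>n. primeideal (P i) (R Quot I)) \<and> (\<forall>i<n. P i \<subset> P (Suc i))"
  proof (intro conjI allI impI)
    fix i assume "i \<le> n" thus "primeideal (P i) (R Quot I)"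
      unfolding P_def using quot_prime_image[OF I Q] IQ mono by blast
  next
    fix i assume i: "i < n"
    have "P i \<subseteq> P (Suc i)" unfolding P_def using ch[OF i] by auto
    moreover have "P i \<noteq> P (Suc i)" using U[of i] U[of "Suc i"] i ch[OF i] by auto
    ultimately show "P i \<subset> P (Suc i)" by blast
  qed
  thus ?thesis unfolding krull_dim_def by (intro Sup_upper) blast
qed

lemma (in cring) krull_quot_le:
  assumes I: "ideal I R"
    and H: "\<And>n Q. (\<And>i. i \<le> n \<Longrightarrow> primeideal (Q i) R) \<Longrightarrow> (\<And>i. i < n \<Longrightarrow> Q i \<subset> Q (Suc i))
               \<Longrightarrow> I \<subseteq> Q 0 \<Longrightarrow> n \<le> N"
  shows "krull_dim (R Quot I) \<le> enat N"
  unfolding krull_dim_def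
proof (rule Sup_least, clarify)
  fix n P assume P: "\<forall>i\<le>n. primeideal (P i :: 'a set set) (R Quot I)" and ch: "\<forall>i<n. P i \<subset> P (Suc i)"
  define Q where "Q i = {r \<in> carrier R. I +> r \<in> P i}" for i
  have Qp: "primeideal (Q i) R" if "i \<le> n" for i
    unfolding Q_def using quot_prime_vimage[OF I] P that by blast
  have "I \<subseteq> Q 0"
  proof
    fix r assume r: "r \<in> I"
    have "I +> r = I" using r ideal.axioms(1)[OF I]
      by (meson abelian_subgroup.a_rcos_const additive_subgroup.a_subgroup I ideal_is_normal is_abelian_group abelian_subgroupI3)
    moreover have "I \<in> P 0"
      using P additive_subgroup.zero_closed[OF ideal.axioms(1)[OF primeideal.axioms(1)]]
      unfolding FactRing_def by (metis le0 ring.simps(1))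
    ultimately show "r \<in> Q 0" unfolding Q_def using r ideal.Icarr[OF I] by simp
  qed
  moreover have "Q i \<subset> Q (Suc i)" if i: "i < n" for i
  proof -
    have "Q i \<subseteq> Q (Suc i)" unfolding Q_def using ch i by auto
    moreover obtain x where x: "x \<in> P (Suc i)" "x \<notin> P i" using ch i by blast
    moreover have "x \<in> carrier (R Quot I)"
      using x P i additive_subgroup.a_subset[OF ideal.axioms(1)[OF primeideal.axioms(1)]]
      by (metis Suc_leI subsetD)
    then obtain r where "r \<in> carrier R" "x = I +> r" using quot_carrier_elem[OF I] by blast
    ultimately show ?thesis unfolding Q_def by auto
  qed
  ultimately show "enat n \<le> enat N" using H[of n Q] Qp by simp
qed

fun pos :: "nat \<Rightarrow> bvert \<Rightarrow> nat" where
  "pos k (Lf1 _) = 0" | "pos k (Pth i) = Suc i" | "pos k (Lf2 _) = Suc k"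

lemma dbE_pos:
  assumes "k \<ge> 1" "double_broom_E n1 k n2 x y"
  shows "pos k x \<le> pos k y + 1 \<and> pos k y \<le> pos k x + 1"
  using assms unfolding double_broom_E_def double_broom_E0_def by auto

lemma sq_pos:
  assumes "k \<ge> 1" "graph_square (double_broom_E n1 k n2) x y"
  shows "pos k x \<le> pos k y + 2 \<and> pos k y \<le> pos k x + 2"
proof -
  have "double_broom_E n1 k n2 x y \<or> (\<exists>w. double_broom_E n1 k n2 x w \<and> double_broom_E n1 k n2 w y)"
    using assms(2) unfolding graph_square_def by blast
  thus ?thesis
  proof
    assume "double_broom_E n1 k n2 x y" thus ?thesis using dbE_pos[OF assms(1)] by fastforce
  next
    assume "\<exists>w. double_broom_E n1 k n2 x w \<and> double_broom_E n1 k n2 w y"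
    then obtain w where "double_broom_E n1 k n2 x w" "double_broom_E n1 k n2 w y" by blast
    thus ?thesis using dbE_pos[OF assms(1), of n1 n2 x w] dbE_pos[OF assms(1), of n1 n2 w y] by linarith
  qed
qed

lemma dbE_V:
  assumes "k \<ge> 1" "double_broom_E n1 k n2 x y"
  shows "x \<in> double_broom_V n1 k n2 \<and> y \<in> double_broom_V n1 k n2"
  using assms unfolding double_broom_E_def double_broom_E0_def double_broom_V_def by auto

lemma sq_sym: "graph_square (double_broom_E n1 k n2) x y = graph_square (double_broom_E n1 k n2) y x"
  unfolding graph_square_def double_broom_E_def by blast

lemma close_adj_ord:
  assumes k: "k \<ge> 4" and x: "x \<in> double_broom_V n1 k n2" and y: "y \<in> double_broom_V n1 k n2"
    and ne: "x \<noteq> y" and le: "pos k x \<le> pos k y" and cl: "pos k y \<le> pos k x + 2"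
  shows "graph_square (double_broom_E n1 k n2) x y"
proof -
  let ?E = "double_broom_E n1 k n2"
  have e1: "?E (Lf1 a) (Pth 0)" if "a < n1 - 1" for a
    using that unfolding double_broom_E_def double_broom_E0_def by auto
  have e2: "?E (Pth i) (Pth (Suc i))" if "Suc i < k" for i
    using that unfolding double_broom_E_def double_broom_E0_def by auto
  have e3: "?E (Pth (k-1)) (Lf2 b)" if "b < n2 - 1" for b
    using that unfolding double_broom_E_def double_broom_E0_def by auto
  have sym: "?E a b \<Longrightarrow> ?E b a" for a b unfolding double_broom_E_def by blast
  show ?thesis
  proof (cases x)
    case (Lf1 a)
    have a: "a < n1 - 1" using x Lf1 unfolding double_broom_V_def by auto
    show ?thesis
    proof (cases y)
      case (Lf1 b)
      have b: "b < n1 - 1" using y Lf1 unfolding double_broom_V_def by auto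
      show ?thesis unfolding graph_square_def using ne e1[OF a] sym[OF e1[OF b]] \<open>x = _\<close> Lf1 by blast
    next
      case (Pth i)
      hence "i \<le> 1" using cl \<open>x = _\<close> by simp
      show ?thesis
      proof (cases i)
        case 0 thus ?thesis unfolding graph_square_def using e1[OF a] \<open>x = _\<close> Pth by auto
      next
        case (Suc j) hence "i = 1" using \<open>i \<le> 1\<close> by simp
        thus ?thesis unfolding graph_square_def using e1[OF a] e2[of 0] k \<open>x = _\<close> Pth by auto
      qed
    next
      case (Lf2 b) thus ?thesis using cl \<open>x = _\<close> k by simp
    qed
  next
    case (Pth i)
    have i: "i < k" using x Pth unfolding double_broom_V_def by auto
    show ?thesis
    proof (cases y)
      case (Lf1 b) thus ?thesis using le ne Pth by simp
    next
      case (Pth j)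
      have j: "j < k" using y Pth unfolding double_broom_V_def by auto
      have "j = Suc i \<or> j = Suc (Suc i)" using le cl ne \<open>x = _\<close> Pth by auto
      thus ?thesis
      proof
        assume "j = Suc i" thus ?thesis unfolding graph_square_def using e2[of i] j \<open>x = _\<close> Pth by auto
      next
        assume "j = Suc (Suc i)" thus ?thesis unfolding graph_square_def using e2[of i] e2[of "Suc i"] j \<open>x = _\<close> Pth by auto
      qed
    next
      case (Lf2 b)
      have b: "b < n2 - 1" using y Lf2 unfolding double_broom_V_def by auto
      have "i = k - 1 \<or> i = k - 2" using cl i \<open>x = _\<close> Lf2 by auto
      thus ?thesis
      proof
        assume "i = k - 1" thus ?thesis unfolding graph_square_def using e3[OF b] \<open>x = _\<close> Lf2 by auto
      next
        assume "i = k - 2"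
        moreover have "?E (Pth (k-2)) (Pth (k-1))" using e2[of "k-2"] k by (simp add: Suc_diff_Suc numeral_2_eq_2)
        ultimately show ?thesis unfolding graph_square_def using e3[OF b] \<open>x = _\<close> Lf2 by auto
      qed
    qed
  next
    case (Lf2 a)
    have a: "a < n2 - 1" using x Lf2 unfolding double_broom_V_def by auto
    show ?thesis
    proof (cases y)
      case (Lf2 b)
      have b: "b < n2 - 1" using y Lf2 unfolding double_broom_V_def by auto
      show ?thesis unfolding graph_square_def using ne e3[OF b] sym[OF e3[OF a]] \<open>x = _\<close> Lf2 by blast
    next
      case (Lf1 b) thus ?thesis using le \<open>x = _\<close> by simp
    next
      case (Pth j) thus ?thesis using le \<open>x = _\<close> y unfolding double_broom_V_def by auto
    qed
  qed
qed

lemma close_adj: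
  assumes k: "k \<ge> 4" and x: "x \<in> double_broom_V n1 k n2" and y: "y \<in> double_broom_V n1 k n2"
    and ne: "x \<noteq> y" and cl: "pos k y \<le> pos k x + 2" "pos k x \<le> pos k y + 2"
  shows "graph_square (double_broom_E n1 k n2) x y"
proof (cases "pos k x \<le> pos k y")
  case True thus ?thesis using close_adj_ord[OF k x y ne] cl by blast
next
  case False thus ?thesis using close_adj_ord[OF k y x ne[symmetric]] cl sq_sym by fastforce
qed

lemma indep_card_le:
  assumes k: "k \<ge> 4" and S: "S \<subseteq> double_broom_V n1 k n2"
    and ind: "\<And>x y. x \<in> S \<Longrightarrow> y \<in> S \<Longrightarrow> x \<noteq> y \<Longrightarrow> \<not> graph_square (double_broom_E n1 k n2) x y"
  shows "card S \<le> Suc ((k + 1) div 3)"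
proof -
  define g where "g x = pos k x div 3" for x
  have inj: "inj_on g S"
  proof (rule inj_onI, rule ccontr)
    fix x y assume xy: "x \<in> S" "y \<in> S" "g x = g y" "x \<noteq> y"
    hence "pos k y \<le> pos k x + 2" "pos k x \<le> pos k y + 2" unfolding g_def by linarith+
    thus False using close_adj[OF k] S xy ind by blast
  qed
  have "pos k x \<le> k + 1" if "x \<in> S" for x using that S unfolding double_broom_V_def by (cases x) auto
  hence "g ` S \<subseteq> {..(k+1) div 3}" unfolding g_def by (auto intro: div_le_mono)
  hence "card (g ` S) \<le> Suc ((k+1) div 3)" by (metis card_atMost card_mono finite_atMost)
  thus ?thesis using card_image[OF inj] by simp
qed

lemma indep_exists:
  assumes k: "k \<ge> 4" and n1: "n1 \<ge> 2" and n2: "n2 \<ge> 2"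
  shows "\<exists>S. S \<subseteq> double_broom_V n1 k n2 \<and> card S = (k - 2) div 3 + 2 \<and>
     (\<forall>x\<in>S. \<forall>y\<in>S. x \<noteq> y \<longrightarrow> \<not> graph_square (double_broom_E n1 k n2) x y)"
proof -
  define q where "q = (k - 2) div 3"
  define P where "P = (\<lambda>j. Pth (3 * j + 2)) ` {..<q}"
  define S where "S = insert (Lf1 0) (insert (Lf2 0) P)"
  have q3: "3 * q \<le> k - 2" unfolding q_def by simp
  have "card P = q" unfolding P_def by (subst card_image) (auto simp: inj_on_def)
  hence cS: "card S = q + 2" unfolding S_def P_def by (auto simp: card_insert_if)
  have SV: "S \<subseteq> double_broom_V n1 k n2"
    unfolding S_def P_def double_broom_V_def using n1 n2 q3 by auto
  have far: "pos k x + 3 \<le> pos k y \<or> pos k y + 3 \<le> pos k x" if "x \<in> S" "y \<in> S" "x \<noteq> y" for x y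
  proof -
    have posP: "\<exists>j<q. pos k z = 3 * j + 3" if "z \<in> P" for z using that unfolding P_def by auto
    have PP: "pos k z + 3 \<le> pos k w \<or> pos k w + 3 \<le> pos k z" if "z \<in> P" "w \<in> P" "z \<noteq> w" for z w
      using that unfolding P_def by auto
    show ?thesis
    proof (cases "x \<in> P \<and> y \<in> P")
      case True thus ?thesis using PP that(3) by blast
    next
      case False thus ?thesis using that q3 k unfolding S_def by (auto dest!: posP)
    qed
  qed
  have "\<forall>x\<in>S. \<forall>y\<in>S. x \<noteq> y \<longrightarrow> \<not> graph_square (double_broom_E n1 k n2) x y"
    using far sq_pos[of k] k by fastforce
  thus ?thesis using SV cS unfolding q_def by blast
qed

lemma formula:
  assumes "k \<ge> 4"
  shows "nat \<lceil>(real k - 4) / 3\<rceil> + 2 = (k - 2) div 3 + 2" and "Suc ((k + 1) div 3) = (k - 2) div 3 + 2"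
proof -
  define t where "t = (k - 2) div 3"
  define r where "r = (k - 2) mod 3"
  have kk: "k = 3 * t + r + 2" unfolding t_def r_def using assms by simp
  have "r < 3" unfolding r_def by simp
  have "\<lceil>(real k - 4) / 3\<rceil> = int t"
    unfolding ceiling_eq_iff using \<open>r < 3\<close> by (simp add: kk field_simps)
  thus "nat \<lceil>(real k - 4) / 3\<rceil> + 2 = (k - 2) div 3 + 2" unfolding t_def by simp
  show "Suc ((k + 1) div 3) = (k - 2) div 3 + 2" using assms by simp
qed

theorem proposition4p15:
  fixes E :: "'v::finite \<Rightarrow> 'v \<Rightarrow> bool"
    and f :: "'v \<Rightarrow> bvert"
    and n1 k n2 :: nat
  assumes "n1 \<ge> 2" and "n2 \<ge> 2" and "k \<ge> 4"
    and "bij_betw f UNIV (double_broom_V n1 k n2)"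
    and "\<And>u v. E u v \<longleftrightarrow> double_broom_E n1 k n2 (f u) (f v)"
  shows "krull_dim (poly_ring Quot (edge_ideal (graph_square E) :: (('v \<Rightarrow>\<^sub>0 nat) \<Rightarrow>\<^sub>0 'k::field) set))
           = enat (nat \<lceil>(real k - 4) / 3\<rceil> + 2)"
proof -
  interpret R: cring "poly_ring :: ('v,'k) mpoly ring" by (rule poly_ring_cring)
  define G where "G = graph_square E"
  define gens :: "('v,'k) mpoly set" where "gens = {pvar u * pvar v | u v. G u v}"
  define I :: "('v,'k) mpoly set" where "I = edge_ideal G"
  have I_def': "I = Idl\<^bsub>poly_ring\<^esub> gens" unfolding I_def edge_ideal_def gens_def ..
  have Iid: "ideal I (poly_ring :: ('v,'k) mpoly ring)" unfolding I_def' by (rule R.genideal_ideal) simp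
  have gensI: "gens \<subseteq> I" unfolding I_def' by (rule R.genideal_self) simp
  have injf: "inj f" using assms(4) bij_betw_imp_inj_on by blast
  have surjf: "f ` UNIV = double_broom_V n1 k n2" using assms(4) bij_betw_imp_surj_on by blast
  have k1: "k \<ge> 1" using assms(3) by simp
  have Gf: "G u w \<longleftrightarrow> graph_square (double_broom_E n1 k n2) (f u) (f w)" for u w
  proof -
    have "(\<exists>x. E u x \<and> E x w) \<longleftrightarrow> (\<exists>b. double_broom_E n1 k n2 (f u) b \<and> double_broom_E n1 k n2 b (f w))"
    proof
      assume "\<exists>b. double_broom_E n1 k n2 (f u) b \<and> double_broom_E n1 k n2 b (f w)"
      then obtain b where b: "double_broom_E n1 k n2 (f u) b" "double_broom_E n1 k n2 b (f w)" by blast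
      hence "b \<in> f ` UNIV" using dbE_V[OF k1 b(1)] surjf by simp
      then obtain x where "b = f x" by blast
      thus "\<exists>x. E u x \<and> E x w" using b assms(5) by blast
    qed (use assms(5) in blast)
    moreover have "u \<noteq> w \<longleftrightarrow> f u \<noteq> f w" using injf by (meson injD)
    ultimately show ?thesis unfolding G_def graph_square_def using assms(5) by blast
  qed
  define \<alpha> where "\<alpha> = (k - 2) div 3 + 2"
  have upper: "krull_dim ((poly_ring :: ('v,'k) mpoly ring) Quot I) \<le> enat \<alpha>"
  proof (rule R.krull_quot_le[OF Iid])
    fix n and Q :: "nat \<Rightarrow> ('v,'k) mpoly set"
    assume Qp: "\<And>i. i \<le> n \<Longrightarrow> primeideal (Q i) poly_ring" and ch: "\<And>i. i < n \<Longrightarrow> Q i \<subset> Q (Suc i)"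
      and IQ: "I \<subseteq> Q 0"
    define W where "W = {v. pvar v \<notin> Q 0}"
    have "n \<le> card W" unfolding W_def
      by (rule chain_bound) (use primeideal_pprime Qp ch in auto)
    have pQ: "pprime (Q 0)" using primeideal_pprime Qp by blast
    have indW: "\<not> G u w" if "u \<in> W" "w \<in> W" for u w
    proof
      assume "G u w"
      hence "pvar u * pvar w \<in> Q 0" using gensI IQ unfolding gens_def by blast
      hence "pvar u \<in> Q 0 \<or> pvar w \<in> Q 0" using pQ unfolding pprime_def by blast
      thus False using that unfolding W_def by blast
    qed
    have "card (f ` W) \<le> Suc ((k + 1) div 3)"
    proof (rule indep_card_le[OF assms(3)])
      show "f ` W \<subseteq> double_broom_V n1 k n2" using surjf by blast
      show "\<And>x y. x \<in> f ` W \<Longrightarrow> y \<in> f ` W \<Longrightarrow> x \<noteq> y \<Longrightarrow> \<not> graph_square (double_broom_E n1 k n2) x y"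
        using indW Gf by blast
    qed
    moreover have "card (f ` W) = card W" using injf by (simp add: card_image inj_on_subset)
    ultimately show "n \<le> \<alpha>" using \<open>n \<le> card W\<close> formula(2)[OF assms(3)] unfolding \<alpha>_def by simp
  qed
  have lower: "enat \<alpha> \<le> krull_dim ((poly_ring :: ('v,'k) mpoly ring) Quot I)"
  proof -
    obtain S where S: "S \<subseteq> double_broom_V n1 k n2" "card S = (k - 2) div 3 + 2"
      "\<forall>x\<in>S. \<forall>y\<in>S. x \<noteq> y \<longrightarrow> \<not> graph_square (double_broom_E n1 k n2) x y"
      using indep_exists[OF assms(3) assms(1) assms(2)] by blast
    define A where "A = f -` S"
    have "f ` A = S" unfolding A_def image_vimage_eq using S(1) surjf by blast
    hence cA: "card A = \<alpha>" using S(2) injf card_image[of f A] unfolding \<alpha>_def by (simp add: inj_on_subset)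
    have indA: "\<not> G u w" if "u \<in> A" "w \<in> A" for u w
    proof (cases "u = w")
      case True thus ?thesis unfolding G_def graph_square_def by simp
    next
      case False thus ?thesis using that S(3) Gf injf unfolding A_def by (metis injD vimageE)
    qed
    obtain e where e: "bij_betw e {0..<card A} A" using ex_bij_betw_nat_finite[OF finite_subset[OF subset_UNIV finite_UNIV], of A] by blast
    have einj: "inj_on e {0..<\<alpha>}" using e cA bij_betw_imp_inj_on by metis
    have eA: "e ` {0..<\<alpha>} = A" using e cA bij_betw_imp_surj_on by metis
    define B where "B j = UNIV - e ` {..< \<alpha> - j}" for j
    define Q :: "nat \<Rightarrow> ('v,'k) mpoly set" where "Q j = mprime (B j)" for j
    show ?thesis
    proof (rule R.krull_quot_ge[OF Iid, of \<alpha> Q])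
      show "\<And>i. i \<le> \<alpha> \<Longrightarrow> primeideal (Q i) poly_ring"
        unfolding Q_def by (rule pprime_primeideal[OF pprime_mprime])
      show "Q i \<subset> Q (Suc i)" if i: "i < \<alpha>" for i
      proof
        show "Q i \<subseteq> Q (Suc i)" unfolding Q_def B_def by (rule mprime_mono) auto
        define v where "v = e (\<alpha> - Suc i)"
        have "v \<in> e ` {..< \<alpha> - i}" unfolding v_def using i by auto
        moreover have "v \<notin> e ` {..< \<alpha> - Suc i}"
        proof
          assume "v \<in> e ` {..< \<alpha> - Suc i}"
          then obtain j where j: "j < \<alpha> - Suc i" "e j = e (\<alpha> - Suc i)" unfolding v_def by auto
          have "j = \<alpha> - Suc i" using einj j i by (intro inj_onD[OF einj]) auto
          thus False using j by simp
        qed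
        ultimately have "pvar v \<in> Q (Suc i)" "pvar v \<notin> Q i"
          unfolding Q_def B_def by (simp_all add: pvar_mprime)
        thus "Q i \<noteq> Q (Suc i)" by blast
      qed
      show "I \<subseteq> Q 0"
        unfolding I_def'
      proof (rule R.genideal_minimal)
        have pQ: "pprime (Q 0)" unfolding Q_def by (rule pprime_mprime)
        show "ideal (Q 0) poly_ring" using pprime_primeideal[OF pQ] primeideal.axioms(1) by blast
        show "gens \<subseteq> Q 0"
        proof
          fix g assume "g \<in> gens"
          then obtain u w where g: "g = pvar u * pvar w" "G u w" unfolding gens_def by blast
          have B0: "B 0 = UNIV - A" unfolding B_def using eA by (simp add: atLeast0LessThan)
          have "u \<notin> A \<or> w \<notin> A" using indA g(2) by blast
          hence "pvar u \<in> Q 0 \<or> pvar w \<in> Q 0" unfolding Q_def B0 by (auto simp: pvar_mprime)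
          moreover have "pideal (Q 0)" using pQ pprime_def by blast
          ultimately show "g \<in> Q 0" unfolding g(1) pideal_def by (metis mult.commute)
        qed
      qed
    qed
  qed
  have "krull_dim ((poly_ring :: ('v,'k) mpoly ring) Quot I) = enat \<alpha>" using upper lower by simp
  thus ?thesis using formula(1)[OF assms(3)] unfolding \<alpha>_def I_def G_def by simp
qed

end
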